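(* Let $m=2^\theta\mu$ with $\theta\ge1$ and $\mu$ odd. The graph $\mathcal{A}_\mu$ is a disjoint union of directed cycles. The graph $\mathcal{A}_m$ is isomorphic to the graph obtained from $\mathcal{A}_\mu$ by replacing each cycle of length $\alpha$ by a copy of the flower cycle $C_\alpha(T_2^\theta)$. Equivalently, $\mathcal{A}_m$ is the disjoint union over the cycles of $\mathcal{A}_\mu$ of graphs $C_\alpha(T_2^\theta)$, where $\alpha$ is the length of the corresponding cycle.
   Context: For a positive integer $m$, $\mathcal{A}_m$ is the directed graph on $\{0,\dots,m-1\}$ with an edge $x\to 2x\bmod m$ for each $x$. A grounded tree is a finite directed graph in which every vertex has out-degree one, a root vertex has a loop, the graph is a tree after deleting this loop, and every vertex has a directed path to the root. The regular grounded tree $T_w^\ell$ ($w\ge1,\ell\ge1$) has $w^\ell$ vertices in layers $0,\dots,\ell$. Layer $0$ is the root, with a loop. Layer $1$ has $w-1$ vertices mapping to the root. Each vertex of layer $j<\ell$, $j\ge1$, has exactly $w$ vertices of layer $j+1$ mapping to it. Layer $\ell$ consists of leaves. For $\alpha\ge1$ and a grounded tree $T$, the flower cycle $C_\alpha(T)$ is built as follows: take $\alpha$ disjoint copies of $T$, delete the root loops, and add an edge from the root of copy $i$ to the root of copy $i+1$, with indices mod $\alpha$. *)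

theory Defs
  imports Main
begin

text \<open>Functional digraphs (every vertex has out-degree one) are represented by a
  vertex set V together with the successor function f (edge x -> f x).\<close>

definition fg_iso :: "'a set \<Rightarrow> ('a \<Rightarrow> 'a) \<Rightarrow> 'b set \<Rightarrow> ('b \<Rightarrow> 'b) \<Rightarrow> bool" where
  "fg_iso V f W g \<longleftrightarrow> (\<exists>h. bij_betw h V W \<and> (\<forall>x\<in>V. h (f x) = g (h x)))"

definition A_verts :: "nat \<Rightarrow> nat set" where
  "A_verts m = {0..<m}"

definition A_map :: "nat \<Rightarrow> nat \<Rightarrow> nat" where
  "A_map m x = (2 * x) mod m"

text \<open>A functional digraph is a disjoint union of directed cycles iff every vertex lies on a cycle.\<close>
definition is_cycle_union :: "'a set \<Rightarrow> ('a \<Rightarrow> 'a) \<Rightarrow> bool" where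
  "is_cycle_union V f \<longleftrightarrow> f ` V \<subseteq> V \<and> (\<forall>x\<in>V. \<exists>n>0. (f ^^ n) x = x)"

text \<open>The cycle (connected component) of a vertex x, i.e. its forward orbit.\<close>
definition orbit_of :: "('a \<Rightarrow> 'a) \<Rightarrow> 'a \<Rightarrow> 'a set" where
  "orbit_of f x = {(f ^^ k) x | k. True}"

definition cycles_of :: "'a set \<Rightarrow> ('a \<Rightarrow> 'a) \<Rightarrow> 'a set set" where
  "cycles_of V f = orbit_of f ` V"

text \<open>The regular grounded tree T_w^l: vertices are lists; the root is [], layer 1 consists of
  [a] with 1 \<le> a < w (w-1 vertices), and a vertex v of layer j (1 \<le> j < l) has the w children
  v @ [b], b < w.  Every vertex maps to its parent (butlast), the root to itself (loop).\<close>
definition tree_verts :: "nat \<Rightarrow> nat \<Rightarrow> nat list set" where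
  "tree_verts w l = {xs. length xs \<le> l \<and> (xs \<noteq> [] \<longrightarrow> 1 \<le> hd xs \<and> hd xs < w)
                        \<and> (\<forall>i. 0 < i \<and> i < length xs \<longrightarrow> xs ! i < w)}"

definition tree_map :: "nat list \<Rightarrow> nat list" where
  "tree_map xs = butlast xs"

definition tree_root :: "nat list" where
  "tree_root = []"

text \<open>Flower cycle C_alpha(T) of a grounded tree T = (V, f, r): alpha copies indexed by
  i < alpha, root loops removed, root of copy i mapped to root of copy (i+1) mod alpha.\<close>
definition flower_verts :: "nat \<Rightarrow> 'a set \<Rightarrow> (nat \<times> 'a) set" where
  "flower_verts \<alpha> V = {0..<\<alpha>} \<times> V"

definition flower_map :: "nat \<Rightarrow> ('a \<Rightarrow> 'a) \<Rightarrow> 'a \<Rightarrow> nat \<times> 'a \<Rightarrow> nat \<times> 'a" where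
  "flower_map \<alpha> f r p = (if snd p = r then ((fst p + 1) mod \<alpha>, r) else (fst p, f (snd p)))"

text \<open>Disjoint union, over the cycles c of A_mu, of the flower cycles C_{|c|}(T_2^theta).\<close>
definition union_verts :: "nat \<Rightarrow> nat \<Rightarrow> (nat set \<times> nat \<times> nat list) set" where
  "union_verts \<mu> \<theta> = (SIGMA c : cycles_of (A_verts \<mu>) (A_map \<mu>).
                          flower_verts (card c) (tree_verts 2 \<theta>))"

definition union_map :: "(nat set \<times> nat \<times> nat list) \<Rightarrow> (nat set \<times> nat \<times> nat list)" where
  "union_map q = (fst q, flower_map (card (fst q)) tree_map tree_root (snd q))"

end

theory Submission imports Defs "HOL-Number_Theory.Number_Theory" begin

lemma fpa: "(f ^^ (m + n)) x = (f ^^ m) ((f ^^ n) x)"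
  by (simp add: funpow_add)

definition per :: "('a \<Rightarrow> 'a) \<Rightarrow> 'a \<Rightarrow> nat" where
  "per f b = (LEAST n. n > 0 \<and> (f ^^ n) b = b)"

lemma per_props:
  assumes "n > 0" "(f ^^ n) b = b"
  shows "per f b > 0" "(f ^^ per f b) b = b" "per f b \<le> n"
proof -
  have "per f b > 0 \<and> (f ^^ per f b) b = b" unfolding per_def
    by (rule LeastI[of _ n]) (use assms in auto)
  then show "per f b > 0" "(f ^^ per f b) b = b" by auto
  show "per f b \<le> n" unfolding per_def by (rule Least_le) (use assms in auto)
qed

lemma per_min:
  assumes "0 < k" "k < per f b" shows "(f ^^ k) b \<noteq> b"
  using assms unfolding per_def using not_less_Least by blast

lemma funpow_mult_fix:
  assumes "(f ^^ p) b = b" shows "(f ^^ (p * q)) b = b"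
proof (induction q)
  case 0 then show ?case by simp
next
  case (Suc q)
  have "(f ^^ (p * Suc q)) b = (f ^^ (p*q)) ((f ^^ p) b)"
    by (metis fpa mult_Suc_right add.commute)
  then show ?case using Suc assms by simp
qed

lemma funpow_mod_per:
  assumes "(f ^^ p) b = b" "p > 0" shows "(f ^^ k) b = (f ^^ (k mod p)) b"
proof -
  have "(f ^^ k) b = (f ^^ (k mod p)) ((f ^^ (p * (k div p))) b)"
    by (metis funpow_add comp_apply mult.commute mod_div_mult_eq add.commute)
  then show ?thesis using funpow_mult_fix[OF assms(1)] by simp
qed

lemma orbit_eq:
  assumes "n > 0" "(f ^^ n) b = b"
  shows "orbit_of f b = (\<lambda>k. (f ^^ k) b) ` {..<per f b}"
proof -
  note pp = per_props[OF assms]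
  show ?thesis unfolding orbit_of_def
  proof (auto)
    fix k show "(f ^^ k) b \<in> (\<lambda>k. (f ^^ k) b) ` {..<per f b}"
      using funpow_mod_per[OF pp(2) pp(1), of k] pp(1)
      by (metis lessThan_iff mod_less_divisor rev_image_eqI)
  qed
qed

lemma orbit_inj:
  assumes "n > 0" "(f ^^ n) b = b"
  shows "inj_on (\<lambda>k. (f ^^ k) b) {..<per f b}"
proof (rule inj_onI, rule ccontr)
  note pp = per_props[OF assms]
  have key: "False" if "i < j" "j < per f b" "(f ^^ i) b = (f ^^ j) b" for i j
  proof -
    have "(f ^^ (per f b - j + i)) b = (f ^^ (per f b - j)) ((f ^^ i) b)"
      using that by (simp only: fpa)
    also have "\<dots> = (f ^^ (per f b - j)) ((f ^^ j) b)" using that by simp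
    also have "\<dots> = (f ^^ (per f b - j + j)) b" by (simp add: funpow_add)
    also have "\<dots> = b" using that pp by simp
    finally have "(f ^^ (per f b - j + i)) b = b" .
    moreover have "0 < per f b - j + i" "per f b - j + i < per f b" using that by arith+
    ultimately show False using per_min by metis
  qed
  fix i j assume "i \<in> {..<per f b}" "j \<in> {..<per f b}" "(f ^^ i) b = (f ^^ j) b" "i \<noteq> j"
  then show False using key[of i j] key[of j i] by (auto simp: linorder_neq_iff)
qed

lemma card_orbit:
  assumes "n > 0" "(f ^^ n) b = b"
  shows "card (orbit_of f b) = per f b"
  using orbit_eq[OF assms] orbit_inj[OF assms] by (simp add: card_image)

lemma finite_orbit:
  assumes "n > 0" "(f ^^ n) b = b"
  shows "finite (orbit_of f b)"
  using orbit_eq[OF assms] by simp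

lemma in_orbit: "b \<in> orbit_of f b"
  unfolding orbit_of_def by (auto intro: exI[of _ 0])

lemma orbit_same:
  assumes "n > 0" "(f ^^ n) b = b" "z \<in> orbit_of f b"
  shows "orbit_of f z = orbit_of f b"
proof -
  note pp = per_props[OF assms(1,2)]
  obtain k where z: "z = (f ^^ k) b" using assms(3) unfolding orbit_of_def by auto
  let ?p = "per f b"
  have "(f ^^ (?p - k mod ?p)) z = (f ^^ (?p - k mod ?p + k mod ?p)) b"
    using z funpow_mod_per[OF pp(2) pp(1), of k] by (simp add: funpow_add)
  also have "\<dots> = b" using pp by simp
  finally have bz: "(f ^^ (?p - k mod ?p)) z = b" .
  show ?thesis unfolding orbit_of_def
  proof (auto)
    fix j show "\<exists>ka. (f ^^ j) z = (f ^^ ka) b" using z fpa[where f=f and m=j and n=k and x=b] by metis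
  next
    fix j show "\<exists>ka. (f ^^ j) b = (f ^^ ka) z" using bz fpa[where f=f and m=j and n="?p - k mod ?p" and x=z] by metis
  qed
qed


fun val :: "nat list \<Rightarrow> nat" where
  "val [] = 0" | "val (b # bs) = b + 2 * val bs"

fun bits :: "nat \<Rightarrow> nat \<Rightarrow> nat list" where
  "bits n 0 = []" | "bits n (Suc L) = n mod 2 # bits (n div 2) L"

definition psi :: "nat \<Rightarrow> nat list \<Rightarrow> nat" where
  "psi \<theta> xs = 2 ^ (\<theta> - length xs) * val xs"

lemma val_lt: "set xs \<subseteq> {..<2} \<Longrightarrow> val xs < 2 ^ length xs"
  by (induction xs) auto

lemma val_snoc: "val (xs @ [b]) = val xs + b * 2 ^ length xs"
  by (induction xs) auto

lemma val_bits: "val (bits n L) = n mod 2 ^ L"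
proof (induction L arbitrary: n)
  case 0 then show ?case by simp
next
  case (Suc L) then show ?case by (simp add: mod_mult2_eq)
qed

lemma length_bits[simp]: "length (bits n L) = L"
  by (induction L arbitrary: n) auto

lemma set_bits: "set (bits n L) \<subseteq> {..<2}"
  by (induction L arbitrary: n) auto

lemma val_inj: "length xs = length ys \<Longrightarrow> set xs \<subseteq> {..<2} \<Longrightarrow> set ys \<subseteq> {..<2}
   \<Longrightarrow> val xs = val ys \<Longrightarrow> xs = ys"
proof (induction xs arbitrary: ys)
  case Nil then show ?case by simp
next
  case (Cons a xs)
  then obtain b ys' where ys: "ys = b # ys'" by (cases ys) auto
  have "a + 2 * val xs = b + 2 * val ys'" using Cons ys by simp
  moreover have "a < 2" "b < 2" using Cons ys by auto
  ultimately have "a = b" "val xs = val ys'" by presburger+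
  then show ?case using Cons ys by auto
qed

lemma tree_mem:
  assumes "xs \<in> tree_verts 2 \<theta>"
  shows "length xs \<le> \<theta>" "set xs \<subseteq> {..<2}" "xs \<noteq> [] \<Longrightarrow> hd xs = 1"
proof -
  show "length xs \<le> \<theta>" using assms by (simp add: tree_verts_def)
  show "xs \<noteq> [] \<Longrightarrow> hd xs = 1" using assms by (simp add: tree_verts_def)
  show "set xs \<subseteq> {..<2}"
  proof
    fix x assume "x \<in> set xs"
    then obtain i where i: "i < length xs" "xs ! i = x" by (auto simp: in_set_conv_nth)
    show "x \<in> {..<2}"
    proof (cases i)
      case 0 then show ?thesis using assms i by (cases xs) (auto simp: tree_verts_def)
    next
      case (Suc j) then show ?thesis using assms i by (auto simp: tree_verts_def)
    qed
  qed
qed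

lemma val_odd: "xs \<noteq> [] \<Longrightarrow> hd xs = 1 \<Longrightarrow> odd (val xs)"
  by (cases xs) auto

lemma psi_lt: assumes "xs \<in> tree_verts 2 \<theta>" shows "psi \<theta> xs < 2 ^ \<theta>"
proof -
  note tm = tree_mem[OF assms]
  have "val xs < 2 ^ length xs" using val_lt tm by blast
  then have "2 ^ (\<theta> - length xs) * val xs < 2 ^ (\<theta> - length xs) * 2 ^ length xs" by simp
  also have "\<dots> = 2 ^ \<theta>" using tm by (simp flip: power_add)
  finally show ?thesis by (simp add: psi_def)
qed

lemma butlast_tree: assumes "xs \<in> tree_verts 2 \<theta>" shows "butlast xs \<in> tree_verts 2 \<theta>"
proof (cases xs rule: rev_cases)
  case Nil then show ?thesis using assms by simp
next
  case (snoc ys y)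
  have A: "length (ys@[y]) \<le> \<theta>" "ys @ [y] \<noteq> [] \<longrightarrow> 1 \<le> hd (ys@[y]) \<and> hd (ys@[y]) < 2"
     "\<forall>i. 0 < i \<and> i < length (ys@[y]) \<longrightarrow> (ys@[y]) ! i < 2"
    using assms unfolding snoc tree_verts_def by auto
  have B: "\<forall>i. 0 < i \<and> i < length ys \<longrightarrow> ys ! i < 2"
    using A(3) by (metis length_append_singleton less_SucI nth_append_left)
  have C: "ys \<noteq> [] \<longrightarrow> 1 \<le> hd ys \<and> hd ys < 2" using A(2) by (simp add: hd_append split: if_splits)
  show ?thesis unfolding snoc tree_verts_def using A(1) B C by simp
qed

lemma psi_butlast:
  assumes "xs \<in> tree_verts 2 \<theta>" "xs \<noteq> []"
  shows "psi \<theta> (butlast xs) = 2 * psi \<theta> xs mod 2 ^ \<theta>"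
proof -
  obtain ys b where xs: "xs = ys @ [b]" using assms(2) by (cases xs rule: rev_cases) auto
  have L: "length ys < \<theta>" using tree_mem(1)[OF assms(1)] xs by simp
  have ys: "ys \<in> tree_verts 2 \<theta>" using butlast_tree[OF assms(1)] xs by simp
  have e: "2 * 2 ^ (\<theta> - Suc (length ys)) = (2::nat) ^ (\<theta> - length ys)"
    using L by (metis Suc_diff_Suc power_Suc)
  have e2: "(2::nat) ^ (\<theta> - length ys) * 2 ^ length ys = 2 ^ \<theta>"
    using L by (simp flip: power_add)
  have "2 * psi \<theta> xs = psi \<theta> ys + b * 2 ^ \<theta>"
    unfolding psi_def xs using e e2
    by (simp add: val_snoc algebra_simps) (metis mult.assoc mult.left_commute)
  then show ?thesis using psi_lt[OF ys] xs by simp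
qed

lemma pow_odd_eq:
  fixes u v :: nat
  assumes "2 ^ a * u = 2 ^ b * v" "odd u" "odd v" shows "a = b"
proof (rule ccontr)
  assume "a \<noteq> b"
  then consider "a < b" | "b < a" by linarith
  then show False
  proof cases
    case 1
    then have "2 ^ a * u = 2 ^ a * (2 ^ (b - a) * v)" using assms(1)
      by (metis le_add_diff_inverse less_imp_le mult.assoc power_add)
    then have "u = 2 ^ (b - a) * v" by simp
    then show False using assms 1 by simp
  next
    case 2
    then have "2 ^ b * v = 2 ^ b * (2 ^ (a - b) * u)" using assms(1)
      by (metis le_add_diff_inverse less_imp_le mult.assoc power_add)
    then have "v = 2 ^ (a - b) * u" by simp
    then show False using assms 2 by simp
  qed
qed

lemma psi_inj: "inj_on (psi \<theta>) (tree_verts 2 \<theta>)"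
proof (rule inj_onI)
  fix xs ys assume xs: "xs \<in> tree_verts 2 \<theta>" and ys: "ys \<in> tree_verts 2 \<theta>"
    and eq: "psi \<theta> xs = psi \<theta> ys"
  note tx = tree_mem[OF xs] and ty = tree_mem[OF ys]
  have pos: "psi \<theta> zs > 0" if "zs \<in> tree_verts 2 \<theta>" "zs \<noteq> []" for zs
    using val_odd[OF that(2) tree_mem(3)[OF that(1) that(2)]] unfolding psi_def
    by (metis nat_0_less_mult_iff odd_pos zero_less_power pos2)
  show "xs = ys"
  proof (cases "xs = []")
    case True
    then show ?thesis using pos[OF ys] eq by (cases "ys = []") (auto simp: psi_def)
  next
    case False
    then have yn: "ys \<noteq> []" using pos[OF xs] eq by (auto simp: psi_def)
    have "\<theta> - length xs = \<theta> - length ys"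
      using pow_odd_eq[OF eq[unfolded psi_def] val_odd[OF False tx(3)[OF False]] val_odd[OF yn ty(3)[OF yn]]] .
    then have l: "length xs = length ys" using tx ty by linarith
    then have "val xs = val ys" using eq by (simp add: psi_def)
    then show ?thesis using val_inj l tx ty by blast
  qed
qed

lemma two_pow_odd: "(n::nat) > 0 \<Longrightarrow> \<exists>a u. n = 2 ^ a * u \<and> odd u"
proof (induction n rule: less_induct)
  case (less n)
  show ?case
  proof (cases "odd n")
    case True then show ?thesis by (intro exI[of _ 0] exI[of _ n]) simp
  next
    case False
    then have "n div 2 < n" "n div 2 > 0" using less.prems by auto
    then obtain a u where "n div 2 = 2 ^ a * u" "odd u" using less.IH by blast
    then show ?thesis using False by (intro exI[of _ "Suc a"] exI[of _ u]) auto
  qed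
qed

lemma psi_surj: assumes "t < 2 ^ \<theta>" shows "\<exists>xs \<in> tree_verts 2 \<theta>. psi \<theta> xs = t"
proof (cases "t = 0")
  case True then show ?thesis by (intro bexI[of _ "[]"]) (auto simp: psi_def tree_verts_def)
next
  case False
  then obtain a u where t: "t = 2 ^ a * u" "odd u" using two_pow_odd by blast
  have "u \<ge> 1" using t(2) by (cases u) auto
  then have "2 ^ a * 1 \<le> t" using t(1) by (metis mult_le_mono2)
  then have "(2::nat) ^ a < 2 ^ \<theta>" using assms by linarith
  then have a: "a < \<theta>" by simp
  have "2 ^ a * u < 2 ^ a * 2 ^ (\<theta> - a)" using assms t a by (simp flip: power_add)
  then have u: "u < 2 ^ (\<theta> - a)" by simp
  define xs where "xs = bits u (\<theta> - a)"
  have v: "val xs = u" unfolding xs_def val_bits using u by simp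
  have hd: "hd xs = 1" unfolding xs_def using a t(2)
    by (cases "\<theta> - a") (auto simp: odd_iff_mod_2_eq_one)
  have sx: "set xs \<subseteq> {..<2}" unfolding xs_def by (rule set_bits)
  have len: "length xs = \<theta> - a" by (simp add: xs_def)
  have "xs \<in> tree_verts 2 \<theta>" unfolding tree_verts_def using hd sx len
    by (auto simp: nth_mem subset_iff)
  moreover have "psi \<theta> xs = t" using v len a t by (simp add: psi_def)
  ultimately show ?thesis by blast
qed


definition rep :: "'a set \<Rightarrow> 'a" where "rep c = (SOME b. b \<in> c)"

lemma fg_iso_inv:
  assumes bij: "bij_betw k W V" and cl: "\<forall>w\<in>W. g w \<in> W"
    and comm: "\<forall>w\<in>W. k (g w) = f (k w)"
  shows "fg_iso V f W g"
  unfolding fg_iso_def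
proof (intro exI conjI ballI)
  let ?h = "inv_into W k"
  show "bij_betw ?h V W" using bij by (rule bij_betw_inv_into)
  fix x assume x: "x \<in> V"
  have inj: "inj_on k W" using bij by (simp add: bij_betw_def)
  obtain w where w: "w \<in> W" "x = k w" using x bij by (auto simp: bij_betw_def)
  have hx: "?h x = w" using w inj by (simp add: inv_into_f_f)
  have "?h (f x) = ?h (k (g w))" using comm w by simp
  also have "\<dots> = g w" using inj cl w by (simp add: inv_into_f_f)
  finally show "?h (f x) = g (?h x)" using hx by simp
qed

definition crt :: "nat \<Rightarrow> nat \<Rightarrow> nat \<Rightarrow> nat \<Rightarrow> nat" where
  "crt P Q t z = (THE x. x < P * Q \<and> x mod P = t \<and> x mod Q = z)"

lemma crt_ex1:
  fixes P Q t z :: nat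
  assumes "coprime P Q" "P \<noteq> 0" "Q \<noteq> 0" "t < P" "z < Q"
  shows "\<exists>!x. x < P * Q \<and> x mod P = t \<and> x mod Q = z"
  using binary_chinese_remainder_unique_nat[OF assms(1-3), of t z] assms(4,5)
  by (simp add: cong_def)

lemma crt_props:
  assumes "coprime P Q" "P \<noteq> 0" "Q \<noteq> 0" "t < P" "z < Q"
  shows "crt P Q t z < P * Q" "crt P Q t z mod P = t" "crt P Q t z mod Q = z"
  using theI'[OF crt_ex1[OF assms]] unfolding crt_def by auto

lemma crt_uniq:
  assumes "coprime P Q" "P \<noteq> 0" "Q \<noteq> 0" "x < P * Q"
  shows "crt P Q (x mod P) (x mod Q) = x"
  unfolding crt_def
  by (rule the1_equality[OF crt_ex1]) (use assms in auto)

lemma crt_double: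
  assumes "coprime P Q" "P \<noteq> 0" "Q \<noteq> 0" "t < P" "z < Q"
  shows "2 * crt P Q t z mod (P * Q) = crt P Q (2 * t mod P) (2 * z mod Q)"
proof -
  let ?x = "2 * crt P Q t z mod (P * Q)"
  have lt: "?x < P * Q" using assms by simp
  have "?x mod P = 2 * t mod P"
    using crt_props(2)[OF assms] by (metis mod_mod_cancel dvd_triv_left mod_mult_right_eq)
  moreover have "?x mod Q = 2 * z mod Q"
    using crt_props(3)[OF assms] by (metis mod_mod_cancel dvd_triv_right mod_mult_right_eq)
  ultimately show ?thesis using crt_uniq[OF assms(1-3) lt] by simp
qed

lemma A_pow: "0 < \<mu> \<Longrightarrow> y < \<mu> \<Longrightarrow> (A_map \<mu> ^^ n) y = 2 ^ n * y mod \<mu>"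
proof (induction n)
  case 0 then show ?case by simp
next
  case (Suc n) then show ?case by (simp add: A_map_def mod_mult_right_eq mult.assoc)
qed

lemma A_lt: "0 < \<mu> \<Longrightarrow> y < \<mu> \<Longrightarrow> (A_map \<mu> ^^ n) y < \<mu>"
  using A_pow by simp

lemma A_period:
  assumes "odd \<mu>" "y < \<mu>" shows "(A_map \<mu> ^^ totient \<mu>) y = y" "totient \<mu> > 0"
proof -
  have pos: "0 < \<mu>" using assms by (simp add: odd_pos)
  have "[2 ^ totient \<mu> = 1] (mod \<mu>)" using euler_theorem[of 2 \<mu>] assms by simp
  then have "2 ^ totient \<mu> mod \<mu> = 1 mod \<mu>" by (simp add: cong_def)
  then have "2 ^ totient \<mu> * y mod \<mu> = y mod \<mu>" by (metis mod_mult_left_eq mult_1)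
  then show "(A_map \<mu> ^^ totient \<mu>) y = y" using A_pow[OF pos assms(2)] assms by simp
  show "totient \<mu> > 0" using pos by simp
qed

locale aset =
  fixes \<mu> \<theta> :: nat
  assumes odd: "odd \<mu>"
begin

abbreviation "f \<equiv> A_map \<mu>"
abbreviation "T \<equiv> totient \<mu>"
abbreviation "C \<equiv> cycles_of (A_verts \<mu>) (A_map \<mu>)"

lemma mu_pos: "0 < \<mu>" using odd by (simp add: odd_pos)

lemma Tp: "y < \<mu> \<Longrightarrow> (f ^^ T) y = y" "T > 0" using A_period[OF odd] mu_pos by auto

lemma orbit_sub: "y < \<mu> \<Longrightarrow> z \<in> orbit_of f y \<Longrightarrow> z < \<mu>"
  unfolding orbit_of_def using A_lt[OF mu_pos] by auto

lemma cyc_elem: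
  assumes "c \<in> C" "z \<in> c"
  shows "z < \<mu>" "orbit_of f z = c" "(f ^^ card c) z = z" "card c > 0" "per f z = card c"
proof -
  obtain y where y: "y < \<mu>" "c = orbit_of f y" using assms(1)
    unfolding cycles_of_def A_verts_def by auto
  show z: "z < \<mu>" using orbit_sub y assms(2) by blast
  show oz: "orbit_of f z = c" using orbit_same[OF Tp(2) Tp(1)[OF y(1)]] y assms(2) by simp
  have "card c = per f z" using card_orbit[OF Tp(2) Tp(1)[OF z]] oz by simp
  then show "(f ^^ card c) z = z" "card c > 0" "per f z = card c"
    using per_props[OF Tp(2) Tp(1)[OF z]] by auto
qed

lemma rep_facts:
  assumes "c \<in> C" shows "rep c \<in> c"
proof -
  obtain y where y: "y < \<mu>" "c = orbit_of f y" using assms(1)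
    unfolding cycles_of_def A_verts_def by auto
  then have "y \<in> c" using in_orbit by metis
  then show ?thesis unfolding rep_def by (rule someI)
qed

lemma rep_pow: "c \<in> C \<Longrightarrow> (f ^^ i) (rep c) \<in> c"
  using cyc_elem(2)[OF _ rep_facts, of c] unfolding orbit_of_def by auto

definition K :: "nat set \<times> nat \<times> nat list \<Rightarrow> nat" where
  "K w = (case w of (c, i, xs) \<Rightarrow>
     crt (2 ^ \<theta>) \<mu> (psi \<theta> xs) ((f ^^ ((card c - 1) * length xs)) ((f ^^ i) (rep c))))"

lemma cop: "coprime (2 ^ \<theta>) \<mu>" using odd by simp

lemma memW: "(c, i, xs) \<in> union_verts \<mu> \<theta> \<longleftrightarrow> c \<in> C \<and> i < card c \<and> xs \<in> tree_verts 2 \<theta>"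
  by (auto simp: union_verts_def flower_verts_def)

lemma z_lt: "c \<in> C \<Longrightarrow> (f ^^ n) ((f ^^ i) (rep c)) < \<mu>"
  using A_lt[OF mu_pos] cyc_elem(1)[OF _ rep_pow] by blast

lemma back_eq:
  assumes "c \<in> C" "e \<in> c"
  shows "(f ^^ L) ((f ^^ ((card c - 1) * L)) e) = e"
proof -
  have "L + (card c - 1) * L = card c * L" using cyc_elem(4)[OF assms]
    by (metis Suc_diff_1 mult_Suc add.commute)
  then show ?thesis using fpa[where f=f and m=L and n="(card c - 1) * L" and x=e] funpow_mult_fix[OF cyc_elem(3)[OF assms]]
    by metis
qed

end


context aset begin

abbreviation "P \<equiv> (2::nat) ^ \<theta>"
abbreviation "W \<equiv> union_verts \<mu> \<theta>"

lemma Pnz: "P \<noteq> 0" by simp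
lemma munz: "\<mu> \<noteq> 0" using mu_pos by simp

lemmas crtP = crt_props[OF cop Pnz munz]

lemma K_into: assumes "w \<in> W" shows "K w < P * \<mu>"
proof -
  obtain c i xs where w: "w = (c, i, xs)" by (cases w) auto
  have "c \<in> C" "xs \<in> tree_verts 2 \<theta>" using assms w memW by auto
  then show ?thesis unfolding w K_def using crtP(1) psi_lt z_lt by simp
qed

lemma K_inj: "inj_on K W"
proof (rule inj_onI)
  fix w w' assume w: "w \<in> W" and w': "w' \<in> W" and eq: "K w = K w'"
  obtain c i xs where wd: "w = (c, i, xs)" by (cases w) auto
  obtain c' i' xs' where wd': "w' = (c', i', xs')" by (cases w') auto
  have m: "c \<in> C" "i < card c" "xs \<in> tree_verts 2 \<theta>" using w wd memW by auto
  have m': "c' \<in> C" "i' < card c'" "xs' \<in> tree_verts 2 \<theta>" using w' wd' memW by auto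
  define e where "e = (f ^^ i) (rep c)"
  define e' where "e' = (f ^^ i') (rep c')"
  have ec: "e \<in> c" "e' \<in> c'" unfolding e_def e'_def using rep_pow m m' by auto
  define z where "z = (f ^^ ((card c - 1) * length xs)) e"
  define z' where "z' = (f ^^ ((card c' - 1) * length xs')) e'"
  have Kw: "K w = crt P \<mu> (psi \<theta> xs) z" unfolding wd K_def z_def e_def by simp
  have Kw': "K w' = crt P \<mu> (psi \<theta> xs') z'" unfolding wd' K_def z'_def e'_def by simp
  have zl: "z < \<mu>" "z' < \<mu>" unfolding z_def z'_def e_def e'_def using z_lt m m' by auto
  have ps: "psi \<theta> xs < P" "psi \<theta> xs' < P" using psi_lt m m' by auto
  have "psi \<theta> xs = psi \<theta> xs'" using crtP(2)[OF ps(1) zl(1)] crtP(2)[OF ps(2) zl(2)] eq Kw Kw' by metis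
  then have xx: "xs = xs'" using psi_inj m(3) m'(3) by (meson inj_onD)
  have "z = z'" using crtP(3)[OF ps(1) zl(1)] crtP(3)[OF ps(2) zl(2)] eq Kw Kw' by metis
  then have ee: "e = e'" using back_eq[OF m(1) ec(1), of "length xs"] back_eq[OF m'(1) ec(2), of "length xs"]
    unfolding z_def z'_def xx by simp
  have cc: "c = c'" using cyc_elem(2)[OF m(1) ec(1)] cyc_elem(2)[OF m'(1) ec(2)] ee by simp
  have rc: "rep c \<in> c" using rep_facts m(1) .
  have pr: "per f (rep c) = card c" using cyc_elem(5)[OF m(1) rc] .
  have "inj_on (\<lambda>k. (f ^^ k) (rep c)) {..<per f (rep c)}"
    using orbit_inj[OF Tp(2) Tp(1)[OF cyc_elem(1)[OF m(1) rc]]] .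
  then have "i = i'" using ee m(2) m'(2) cc pr unfolding e_def e'_def by (auto dest: inj_onD)
  then show "w = w'" using wd wd' xx cc by simp
qed

lemma K_surj: assumes "x < P * \<mu>" shows "x \<in> K ` W"
proof -
  define t where "t = x mod P"
  define y where "y = x mod \<mu>"
  have yl: "y < \<mu>" unfolding y_def using mu_pos by simp
  obtain xs where xs: "xs \<in> tree_verts 2 \<theta>" "psi \<theta> xs = t"
    using psi_surj[of t \<theta>] unfolding t_def by auto
  define L where "L = length xs"
  define y' where "y' = (f ^^ L) y"
  have y'l: "y' < \<mu>" unfolding y'_def using A_lt[OF mu_pos yl] .
  define c where "c = orbit_of f y'"
  have cC: "c \<in> C" unfolding c_def cycles_of_def A_verts_def using y'l by auto
  have y'c: "y' \<in> c" unfolding c_def by (rule in_orbit)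
  have rc: "rep c \<in> c" using rep_facts cC .
  have orc: "orbit_of f (rep c) = c" using cyc_elem(2)[OF cC rc] .
  have prc: "per f (rep c) = card c" using cyc_elem(5)[OF cC rc] .
  have "y' \<in> (\<lambda>k. (f ^^ k) (rep c)) ` {..<per f (rep c)}"
    using orbit_eq[OF Tp(2) Tp(1)[OF cyc_elem(1)[OF cC rc]]] orc y'c by simp
  then obtain i where i: "i < card c" "(f ^^ i) (rep c) = y'" using prc by auto
  have "y' \<in> orbit_of f y" unfolding y'_def orbit_of_def by auto
  then have "orbit_of f y = c" using orbit_same[OF Tp(2) Tp(1)[OF yl]] unfolding c_def by simp
  then have yc: "y \<in> c" using in_orbit by metis
  have "(f ^^ ((card c - 1) * L)) y' = y"
  proof -
    have "(card c - 1) * L + L = card c * L" using cyc_elem(4)[OF cC yc]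
      by (metis Suc_diff_1 mult_Suc add.commute)
    then have "(f ^^ ((card c - 1) * L)) y' = (f ^^ (card c * L)) y"
      unfolding y'_def using fpa[where f=f and m="(card c - 1) * L" and n=L and x=y] by metis
    also have "\<dots> = y" using funpow_mult_fix[OF cyc_elem(3)[OF cC yc]] .
    finally show ?thesis .
  qed
  then have "K (c, i, xs) = crt P \<mu> t y" unfolding K_def using i xs L_def by simp
  also have "\<dots> = x" unfolding t_def y_def using crt_uniq[OF cop Pnz munz assms] .
  finally have "K (c, i, xs) = x" .
  moreover have "(c, i, xs) \<in> W" using memW cC i xs by simp
  ultimately show ?thesis by force
qed

lemma closed: assumes "w \<in> W" shows "union_map w \<in> W"
proof -
  obtain c i xs where wd: "w = (c, i, xs)" by (cases w) auto
  have m: "c \<in> C" "i < card c" "xs \<in> tree_verts 2 \<theta>" using assms wd memW by auto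
  have cp: "card c > 0" using cyc_elem(4)[OF m(1) rep_facts[OF m(1)]] .
  show ?thesis
  proof (cases "xs = []")
    case True
    then show ?thesis using m cp unfolding wd union_map_def flower_map_def tree_root_def
      by (simp add: memW tree_verts_def)
  next
    case False
    then show ?thesis using m butlast_tree[OF m(3)]
      unfolding wd union_map_def flower_map_def tree_root_def tree_map_def by (simp add: memW)
  qed
qed

lemma comm: assumes "w \<in> W" shows "K (union_map w) = A_map (P * \<mu>) (K w)"
proof -
  obtain c i xs where wd: "w = (c, i, xs)" by (cases w) auto
  have m: "c \<in> C" "i < card c" "xs \<in> tree_verts 2 \<theta>" using assms wd memW by auto
  define p where "p = card c"
  have rc: "rep c \<in> c" using rep_facts m(1) .
  have cp: "p > 0" using cyc_elem(4)[OF m(1) rc] unfolding p_def .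
  define e where "e = (f ^^ i) (rep c)"
  have ec: "e \<in> c" unfolding e_def using rep_pow m by auto
  define L where "L = length xs"
  define z where "z = (f ^^ ((p - 1) * L)) e"
  have zl: "z < \<mu>" unfolding z_def e_def using z_lt m by auto
  have ps: "psi \<theta> xs < P" using psi_lt m by auto
  have Kw: "K w = crt P \<mu> (psi \<theta> xs) z" unfolding wd K_def z_def e_def p_def L_def by simp
  have dbl: "A_map (P * \<mu>) (K w) = crt P \<mu> (2 * psi \<theta> xs mod P) (f z)"
    unfolding Kw A_map_def using crt_double[OF cop Pnz munz ps zl] by simp
  show ?thesis
  proof (cases "xs = []")
    case True
    have um: "union_map w = (c, (i + 1) mod p, [])"
      unfolding wd union_map_def flower_map_def tree_root_def p_def using True by simp
    have "(f ^^ ((i + 1) mod p)) (rep c) = (f ^^ (i + 1)) (rep c)"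
      using funpow_mod_per[OF cyc_elem(3)[OF m(1) rc] cyc_elem(4)[OF m(1) rc]] unfolding p_def by metis
    also have "\<dots> = f z" unfolding z_def e_def L_def True by simp
    finally have "K (union_map w) = crt P \<mu> 0 (f z)" unfolding um K_def by (simp add: psi_def)
    then show ?thesis using dbl True by (simp add: psi_def)
  next
    case False
    have um: "union_map w = (c, i, butlast xs)"
      unfolding wd union_map_def flower_map_def tree_root_def tree_map_def using False by simp
    have L1: "L \<ge> 1" using False L_def by (cases xs) auto
    have eq: "Suc ((p - 1) * L) = (p - 1) * (L - 1) + p" using L1 cp
      by (cases L; cases p) (auto simp: algebra_simps)
    have "f z = (f ^^ Suc ((p - 1) * L)) e" by (simp add: z_def)
    also have "\<dots> = (f ^^ ((p - 1) * (L - 1))) ((f ^^ p) e)" by (simp only: eq fpa)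
    also have "\<dots> = (f ^^ ((p - 1) * (L - 1))) e" using cyc_elem(3)[OF m(1) ec] unfolding p_def by simp
    finally have fz: "f z = (f ^^ ((p - 1) * (L - 1))) e" .
    have "K (union_map w) = crt P \<mu> (psi \<theta> (butlast xs)) (f z)"
      unfolding um K_def fz e_def p_def L_def by simp
    then show ?thesis using dbl psi_butlast[OF m(3) False] by simp
  qed
qed

end

theorem proposition5:
  fixes m \<mu> \<theta> :: nat
  assumes "m = 2 ^ \<theta> * \<mu>" and "\<theta> \<ge> 1" and "odd \<mu>"
  shows "is_cycle_union (A_verts \<mu>) (A_map \<mu>)
         \<and> fg_iso (A_verts m) (A_map m) (union_verts \<mu> \<theta>) union_map"
proof
  interpret aset \<mu> \<theta> using assms(3) by unfold_locales
  show "is_cycle_union (A_verts \<mu>) (A_map \<mu>)"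
    unfolding is_cycle_union_def A_verts_def
    using Tp mu_pos by (auto simp: A_map_def) (meson Tp)
  have "bij_betw K W {0..<m}"
    unfolding bij_betw_def using K_inj K_into K_surj assms(1) by auto
  then show "fg_iso (A_verts m) (A_map m) (union_verts \<mu> \<theta>) union_map"
    unfolding A_verts_def using fg_iso_inv[of K W "{0..<m}" union_map "A_map m"] closed comm assms(1)
    by auto
qed

end
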